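(* Let $M$ be a finite rectangular monoid generated by regular elements, and let $e,f\in E(M)$. (1) If $MeM$ and $MfM$ are incomparable, then every $m\in\mathrm{AIrr}_{\mathscr K(M)}(e,f)=\mathrm{Irr}_{\mathscr K(M)}(e,f)$ is of the form $ba$ with $Ma=Me$ and $bM=fM$. (2) If $MeM\subsetneq MfM$, then $\mathrm{AIrr}_{\mathscr K(M)}(e,f)=\{m\in fMe: Mm=Me\}$. (3) If $MeM\supsetneq MfM$, then $\mathrm{AIrr}_{\mathscr K(M)}(e,f)=\{m\in fMe: mM=fM\}$. (4) $\mathrm{AIrr}_{\mathscr K(M)}(e,e)=G_e$.
   Context: $E(M)$ idempotents; $M$ rectangular: each $\{g\in E(M): MgM=MeM\}$ closed under multiplication. $m$ is regular if $m\in mMm$. The Karoubi envelope $\mathscr K(M)$ has objects $E(M)$, morphisms $e\to f$ the elements of $fMe$, composition the product. A morphism $m$ is almost irreducible if whenever $m=gh$ in $\mathscr K(M)$, $h$ is a split monomorphism or $g$ is a split epimorphism; irreducible if in addition it is neither a split monomorphism nor a split epimorphism. $\mathrm{AIrr}_{\mathscr K(M)}(e,f)$, $\mathrm{Irr}_{\mathscr K(M)}(e,f)$ denote these sets. $G_e$ is the group of units of $eMe$. *)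

theory Defs
  imports Main
begin

text \<open>A finite monoid is modelled as a finite type of class monoid_mult; M = UNIV.\<close>

definition idems :: "'a::monoid_mult set" where
  "idems = {e. e * e = e}"

definition two_ideal :: "'a::monoid_mult \<Rightarrow> 'a set" where
  "two_ideal x = {a * x * b | a b. True}"

definition left_ideal :: "'a::monoid_mult \<Rightarrow> 'a set" where
  "left_ideal x = {a * x | a. True}"

definition right_ideal :: "'a::monoid_mult \<Rightarrow> 'a set" where
  "right_ideal x = {x * b | b. True}"

definition rectangular :: "'a::monoid_mult itself \<Rightarrow> bool" where
  "rectangular _ \<longleftrightarrow> (\<forall>e\<in>(idems::'a set). \<forall>g h.
      g \<in> idems \<and> two_ideal g = two_ideal e \<and> h \<in> idems \<and> two_ideal h = two_ideal e
      \<longrightarrow> g * h \<in> idems \<and> two_ideal (g * h) = two_ideal e)"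

definition regular :: "'a::monoid_mult \<Rightarrow> bool" where
  "regular m \<longleftrightarrow> (\<exists>x. m = m * x * m)"

definition generated_by_regular :: "'a::monoid_mult itself \<Rightarrow> bool" where
  "generated_by_regular _ \<longleftrightarrow>
     (\<forall>m::'a. \<exists>xs. (\<forall>x\<in>set xs. regular x) \<and> m = prod_list xs)"

text \<open>Karoubi envelope: hom e f = fMe; identity on e is e.\<close>
definition khom :: "'a::monoid_mult \<Rightarrow> 'a \<Rightarrow> 'a set" where
  "khom e f = {f * x * e | x. True}"

definition split_mono :: "'a::monoid_mult \<Rightarrow> 'a \<Rightarrow> 'a \<Rightarrow> bool" where
  "split_mono e f h \<longleftrightarrow> (\<exists>r\<in>khom f e. r * h = e)"

definition split_epi :: "'a::monoid_mult \<Rightarrow> 'a \<Rightarrow> 'a \<Rightarrow> bool" where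
  "split_epi e f g \<longleftrightarrow> (\<exists>s\<in>khom f e. g * s = f)"

definition AIrr :: "'a::monoid_mult \<Rightarrow> 'a \<Rightarrow> 'a set" where
  "AIrr e f = {m \<in> khom e f. \<forall>e'\<in>idems. \<forall>h\<in>khom e e'. \<forall>g\<in>khom e' f.
       m = g * h \<longrightarrow> split_mono e e' h \<or> split_epi e' f g}"

definition Irr :: "'a::monoid_mult \<Rightarrow> 'a \<Rightarrow> 'a set" where
  "Irr e f = {m \<in> AIrr e f. \<not> split_mono e f m \<and> \<not> split_epi e f m}"

definition unit_group :: "'a::monoid_mult \<Rightarrow> 'a set" where
  "unit_group e = {u \<in> khom e e. \<exists>v\<in>khom e e. u * v = e \<and> v * u = e}"

end

theory Submission
  imports Defs
begin

lemma two_ideal_iff: "z \<in> two_ideal x \<longleftrightarrow> (\<exists>a b. z = a*x*b)"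
  unfolding two_ideal_def by blast

lemma two_ideal_trans:
  assumes "(a::'a::monoid_mult) \<in> two_ideal b" shows "two_ideal a \<subseteq> two_ideal b"
proof
  fix z assume "z \<in> two_ideal a"
  then obtain c d where z: "z = c*a*d" by (auto simp: two_ideal_iff)
  from assms obtain c' d' where a: "a = c'*b*d'" by (auto simp: two_ideal_iff)
  have "z = (c*c')*b*(d'*d)" by (simp add: z a mult.assoc)
  then show "z \<in> two_ideal b" by (auto simp: two_ideal_iff)
qed

lemma self_two_ideal: "(x::'a::monoid_mult) \<in> two_ideal x"
  unfolding two_ideal_iff by (rule exI[of _ 1], rule exI[of _ 1]) simp

lemma fin_inv_aux:
  fixes e x y :: "'a::{monoid_mult,finite}"
  assumes e: "e*e = e" and x: "e*x = x" "x*e = x" and y: "e*y = y" "y*e = y" and xy: "x*y = e"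
  shows "y*x = e"
proof -
  define A where "A = {z::'a. e*z = z \<and> z*e = z}"
  have inj: "inj_on ((*) y) A"
  proof (rule inj_onI)
    fix z1 z2 assume z: "z1 \<in> A" "z2 \<in> A" "y*z1 = y*z2"
    have "z1 = e*z1" using z(1) by (simp add: A_def)
    also have "\<dots> = x*(y*z1)" by (simp add: xy mult.assoc[symmetric])
    also have "\<dots> = x*(y*z2)" using z by simp
    also have "\<dots> = e*z2" by (simp add: xy mult.assoc[symmetric])
    also have "\<dots> = z2" using z(2) by (simp add: A_def)
    finally show "z1 = z2" .
  qed
  have sub: "(*) y ` A \<subseteq> A"
  proof
    fix w assume "w \<in> (*) y ` A"
    then obtain z where z: "z \<in> A" "w = y*z" by auto
    have "e*(y*z) = y*z" by (simp add: y mult.assoc[symmetric])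
    moreover have "(y*z)*e = y*z" using z(1) by (simp add: A_def mult.assoc)
    ultimately show "w \<in> A" using z unfolding A_def by simp
  qed
  have "(*) y ` A = A" by (rule endo_inj_surj[OF _ sub inj]) simp
  moreover have "e \<in> A" using e unfolding A_def by simp
  ultimately obtain z where z: "z \<in> A" "y*z = e" by (metis imageE)
  have "x = x*(y*z)" using z x by simp
  also have "\<dots> = e*z" by (simp add: xy mult.assoc[symmetric])
  also have "\<dots> = z" using z(1) by (simp add: A_def)
  finally show ?thesis using z by simp
qed

lemma fin_unit:
  fixes e x a b :: "'a::{monoid_mult,finite}"
  assumes e: "e*e = e" and x: "e*x = x" "x*e = x" and axb: "a*x*b = e"
  shows "\<exists>v. e*v = v \<and> v*e = v \<and> x*v = e \<and> v*x = e"
proof -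
  define a' where "a' = e*a*e"
  define b' where "b' = e*b*e"
  have a': "e*a' = a'" "a'*e = a'" by (simp_all add: a'_def e mult.assoc[symmetric]) (simp add: mult.assoc e)
  have b': "e*b' = b'" "b'*e = b'" by (simp_all add: b'_def e mult.assoc[symmetric]) (simp add: mult.assoc e)
  have "a'*x*b' = e*(a*(e*x*e)*b)*e" by (simp add: a'_def b'_def mult.assoc)
  also have "\<dots> = e" using x axb e by (simp add: mult.assoc)
  finally have main: "a'*x*b' = e" .
  have 1: "(x*b')*a' = e"
    by (rule fin_inv_aux[OF e]) (metis mult.assoc a' b' x main)+
  have 2: "b'*(a'*x) = e"
    by (rule fin_inv_aux[OF e]) (metis mult.assoc a' b' x main)+
  show ?thesis
    by (intro exI[of _ "b'*a'"]) (metis mult.assoc a' b' 1 2)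
qed


lemma rect:
  fixes e g h :: "'a::monoid_mult"
  assumes "rectangular TYPE('a)" "e*e = e" "g*g = g" "two_ideal g = two_ideal e"
    "h*h = h" "two_ideal h = two_ideal e"
  shows "(g*h)*(g*h) = g*h \<and> two_ideal (g*h) = two_ideal e"
  using assms unfolding rectangular_def idems_def by blast

lemma eps_lemma:
  fixes a b :: "'a::{monoid_mult,finite}"
  assumes R: "rectangular TYPE('a)" and a: "a*a = a" and b: "b*b = b" and ab: "a \<in> two_ideal b"
  shows "\<exists>z. z*(b*a) = a" "\<exists>w. (a*b)*w = a"
proof -
  obtain c d where cd: "a = c*b*d" using ab by (auto simp: two_ideal_iff)
  define \<epsilon> where "\<epsilon> = b*d*a*c*b"
  have L1: "\<And>x. x*b*b = x*b" by (simp add: mult.assoc b)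
  have L2: "\<And>x. x*c*b*d = x*a" "c*b*d = a" by (simp_all add: mult.assoc cd)
  have L3: "\<And>x. x*a*a = x*a" by (simp add: mult.assoc a)
  have ee: "\<epsilon>*\<epsilon> = \<epsilon>" by (simp add: \<epsilon>_def mult.assoc[symmetric] L1 L2 L3)
  have "\<epsilon> \<in> two_ideal a" unfolding two_ideal_iff
    by (rule exI[of _ "b*d"], rule exI[of _ "c*b"]) (simp add: \<epsilon>_def mult.assoc)
  moreover have "a \<in> two_ideal \<epsilon>" unfolding two_ideal_iff
    by (rule exI[of _ "a*c"], rule exI[of _ "d*a"]) (simp add: \<epsilon>_def mult.assoc[symmetric] L1 L2 L3 a)
  ultimately have te: "two_ideal \<epsilon> = two_ideal a" using two_ideal_trans by blast
  have "(a*\<epsilon>)*(a*\<epsilon>) = a*\<epsilon> \<and> two_ideal (a*\<epsilon>) = two_ideal a"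
    by (rule rect[OF R a a refl ee te])
  then have "(a*\<epsilon>*a)*(a*\<epsilon>*a) = a*\<epsilon>*a \<and> two_ideal (a*\<epsilon>*a) = two_ideal a"
    using rect[OF R a, of "a*\<epsilon>" a] a by blast
  then have x2: "(a*\<epsilon>*a)*(a*\<epsilon>*a) = a*\<epsilon>*a" and "a \<in> two_ideal (a*\<epsilon>*a)"
    using self_two_ideal[of a] by auto
  then obtain c' d' where "c'*(a*\<epsilon>*a)*d' = a" unfolding two_ideal_iff by metis
  moreover have "a*(a*\<epsilon>*a) = a*\<epsilon>*a" "(a*\<epsilon>*a)*a = a*\<epsilon>*a"
    by (simp_all add: mult.assoc[symmetric] a) (simp add: mult.assoc a)
  ultimately obtain v where v: "(a*\<epsilon>*a)*v = a" using fin_unit[OF a] by blast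
  have aea: "a*\<epsilon>*a = a"
  proof -
    have "a*\<epsilon>*a = (a*\<epsilon>*a)*a" by (simp add: mult.assoc a)
    also have "\<dots> = ((a*\<epsilon>*a)*(a*\<epsilon>*a))*v" by (metis mult.assoc v)
    also have "\<dots> = a" using x2 v by simp
    finally show ?thesis .
  qed
  have eb: "\<epsilon>*b = \<epsilon>" by (simp add: \<epsilon>_def mult.assoc b)
  have be: "b*\<epsilon> = \<epsilon>" by (simp add: \<epsilon>_def mult.assoc[symmetric] b)
  show "\<exists>z. z*(b*a) = a"
    by (rule exI[of _ "a*\<epsilon>"]) (metis aea eb mult.assoc)
  show "\<exists>w. (a*b)*w = a"
    by (rule exI[of _ "\<epsilon>*a"]) (metis aea be mult.assoc)
qed


lemma khom_char:
  fixes e f z :: "'a::monoid_mult"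
  assumes e: "e*e = e" and f: "f*f = f"
  shows "z \<in> khom e f \<longleftrightarrow> f*z = z \<and> z*e = z"
proof
  assume "z \<in> khom e f"
  then obtain x where z: "z = f*x*e" unfolding khom_def by blast
  show "f*z = z \<and> z*e = z" unfolding z
    by (simp add: mult.assoc[symmetric] f) (simp add: mult.assoc e)
next
  assume "f*z = z \<and> z*e = z"
  then have "z = f*z*e" by simp
  then show "z \<in> khom e f" unfolding khom_def by blast
qed

lemma left_eq:
  fixes e a :: "'a::monoid_mult"
  assumes "a*e = a"
  shows "left_ideal a = left_ideal e \<longleftrightarrow> (\<exists>r. r*a = e)"
proof
  assume "left_ideal a = left_ideal e"
  moreover have "e \<in> left_ideal e" unfolding left_ideal_def by (auto intro: exI[of _ 1])
  ultimately have "e \<in> left_ideal a" by simp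
  then show "\<exists>r. r*a = e" unfolding left_ideal_def by auto
next
  assume "\<exists>r. r*a = e"
  then obtain r where r: "r*a = e" by blast
  show "left_ideal a = left_ideal e"
  proof
    show "left_ideal a \<subseteq> left_ideal e" unfolding left_ideal_def
      using assms by (auto, metis mult.assoc)
    show "left_ideal e \<subseteq> left_ideal a" unfolding left_ideal_def
      using r by (auto, metis mult.assoc)
  qed
qed

lemma right_eq:
  fixes f u :: "'a::monoid_mult"
  assumes "f*u = u"
  shows "right_ideal u = right_ideal f \<longleftrightarrow> (\<exists>s. u*s = f)"
proof
  assume "right_ideal u = right_ideal f"
  moreover have "f \<in> right_ideal f" unfolding right_ideal_def by (auto intro: exI[of _ 1])
  ultimately have "f \<in> right_ideal u" by simp
  then show "\<exists>s. u*s = f" unfolding right_ideal_def by auto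
next
  assume "\<exists>s. u*s = f"
  then obtain s where s: "u*s = f" by blast
  show "right_ideal u = right_ideal f"
  proof
    show "right_ideal u \<subseteq> right_ideal f" unfolding right_ideal_def
      using assms by (auto, metis mult.assoc)
    show "right_ideal f \<subseteq> right_ideal u" unfolding right_ideal_def
      using s by (auto, metis mult.assoc)
  qed
qed

lemma smono_char:
  fixes e e' h :: "'a::monoid_mult"
  assumes e: "e*e = e" and e': "e'*e' = e'" and h: "e'*h = h"
  shows "split_mono e e' h \<longleftrightarrow> (\<exists>r. r*h = e)"
proof
  assume "split_mono e e' h" then show "\<exists>r. r*h = e" unfolding split_mono_def by blast
next
  assume "\<exists>r. r*h = e"
  then obtain r where r: "r*h = e" by blast
  have "e*r*e' \<in> khom e' e" unfolding khom_def by blast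
  moreover have "(e*r*e')*h = e" using r h e by (metis mult.assoc)
  ultimately show "split_mono e e' h" unfolding split_mono_def by blast
qed

lemma sepi_char:
  fixes e' f g :: "'a::monoid_mult"
  assumes f: "f*f = f" and e': "e'*e' = e'" and g: "g*e' = g"
  shows "split_epi e' f g \<longleftrightarrow> (\<exists>s. g*s = f)"
proof
  assume "split_epi e' f g" then show "\<exists>s. g*s = f" unfolding split_epi_def by blast
next
  assume "\<exists>s. g*s = f"
  then obtain s where s: "g*s = f" by blast
  have "e'*s*f \<in> khom f e'" unfolding khom_def by blast
  moreover have "g*(e'*s*f) = f" using s g f by (metis mult.assoc)
  ultimately show "split_epi e' f g" unfolding split_epi_def by blast
qed

lemma key:
  fixes e f m :: "'a::monoid_mult"
  assumes gen: "generated_by_regular TYPE('a)" and e: "e*e = e" and f: "f*f = f"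
    and mA: "m \<in> AIrr e f"
  shows "\<exists>u t. m = u*t \<and> f*u = u \<and> (\<exists>s. u*s = f) \<and> t*e = t \<and> (\<exists>r. r*t = e)"
proof -
  have mk: "m \<in> khom e f" using mA unfolding AIrr_def by blast
  then have fm: "f*m = m" and me: "m*e = m" using khom_char[OF e f] by auto
  obtain xs where xs: "\<forall>x\<in>set xs. regular x" "m = prod_list xs"
    using gen unfolding generated_by_regular_def by blast
  define ys where "ys = f # xs @ [e]"
  have pys: "prod_list ys = m" using fm me xs(2) by (simp add: ys_def)
  have regys: "\<forall>x\<in>set ys. regular x" using xs(1) e f unfolding ys_def regular_def
    by (auto intro: exI[of _ e] exI[of _ f] simp: mult.assoc)
  define S where "S i = prod_list (drop i ys)" for i
  define P where "P i = prod_list (take i ys)" for i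
  have PS: "P i * S i = m" for i
    unfolding P_def S_def pys[symmetric] prod_list.append[symmetric] by simp
  have Se: "S i * e = S i" if "i < length ys" for i
  proof -
    have "ys = (f#xs) @ [e]" unfolding ys_def by simp
    then have "drop i ys = drop i (f#xs) @ drop (i - length (f#xs)) [e]" by (simp only: drop_append)
    moreover have "i - length (f#xs) = 0" using that unfolding ys_def by simp
    ultimately have "drop i ys = drop i (f#xs) @ [e]" by simp
    then show ?thesis unfolding S_def by (simp add: mult.assoc e)
  qed
  have fP: "f * P i = P i" if "0 < i" for i
  proof -
    define k where "k = i - 1"
    have k: "i = Suc k" using that unfolding k_def by simp
    have "P i = f * prod_list (take k (xs@[e]))" unfolding P_def k ys_def by simp
    then show ?thesis by (simp add: mult.assoc[symmetric] f)
  qed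
  define A where "A = {i. i < length ys \<and> (\<exists>r. r * S i = e)}"
  have lA: "length ys - 1 \<in> A"
  proof -
    have "S (length ys - 1) = e" unfolding S_def ys_def by simp
    moreover have "length ys - 1 < length ys" unfolding ys_def by simp
    ultimately show ?thesis unfolding A_def using e by auto
  qed
  define i0 where "i0 = (LEAST i. i \<in> A)"
  have i0A: "i0 \<in> A" unfolding i0_def using lA by (rule LeastI)
  then have i0l: "i0 < length ys" and ri0: "\<exists>r. r * S i0 = e" unfolding A_def by auto
  show ?thesis
  proof (cases "i0 = 0")
    case True
    have "S 0 = m" unfolding S_def using pys by simp
    then show ?thesis using True ri0 f Se[OF i0l]
      by (intro exI[of _ f] exI[of _ m]) (auto simp: fm intro: exI[of _ f])
  next
    case False
    define j where "j = i0 - 1"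
    have ij: "i0 = Suc j" using False unfolding j_def by simp
    have jl: "j < length ys" using i0l ij by simp
    have jA: "j \<notin> A" using not_less_Least[of j "\<lambda>i. i \<in> A"] ij unfolding i0_def by simp
    define x where "x = ys ! j"
    have "regular x" using regys jl unfolding x_def by simp
    then obtain y where xyx: "x = x*y*x" unfolding regular_def by blast
    have xyx': "x*(y*x) = x" using xyx by (simp add: mult.assoc)
    have xyx'': "x*(y*(x*z)) = x*z" for z using xyx' by (metis mult.assoc)
    have Sj: "S j = x * S i0" unfolding S_def x_def ij
      using Cons_nth_drop_Suc[OF jl] by (metis prod_list.Cons)
    have Pi0: "P i0 = P j * x" unfolding P_def x_def ij
      using take_Suc_conv_app_nth[OF jl] by simp
    define e' where "e' = x*y"
    have e'e': "e'*e' = e'" unfolding e'_def by (simp add: mult.assoc xyx'')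
    define h where "h = S j"
    define g where "g = P i0 * y"
    have hk: "h \<in> khom e e'"
      unfolding khom_char[OF e e'e'] unfolding h_def e'_def
      using Se[OF jl] by (simp add: Sj mult.assoc xyx'')
    have gk: "g \<in> khom e' f"
      unfolding khom_char[OF e'e' f] unfolding g_def e'_def
    proof
      show "f * (P i0 * y) = P i0 * y" using fP[of i0] ij by (simp add: mult.assoc[symmetric])
      show "P i0 * y * (x * y) = P i0 * y" by (simp add: Pi0 mult.assoc xyx'')
    qed
    have mgh: "m = g*h" unfolding g_def h_def
      using PS[of i0] by (simp add: Sj Pi0 mult.assoc xyx'')
    have e'A: "e' \<in> idems" using e'e' unfolding idems_def by simp
    have "split_mono e e' h \<or> split_epi e' f g"
      using mA e'A hk gk mgh unfolding AIrr_def by blast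
    moreover have "\<not> split_mono e e' h"
    proof
      assume "split_mono e e' h"
      then obtain r where "r*h = e" unfolding split_mono_def by blast
      then have "j \<in> A" unfolding A_def h_def using jl by auto
      then show False using jA by simp
    qed
    ultimately have "split_epi e' f g" by blast
    then obtain s where s: "g*s = f" unfolding split_epi_def by blast
    show ?thesis
    proof (intro exI conjI)
      show "m = P i0 * S i0" using PS by simp
      show "f * P i0 = P i0" using fP ij by simp
      show "P i0 * (y*s) = f" using s unfolding g_def by (simp add: mult.assoc)
      show "S i0 * e = S i0" using Se[OF i0l] .
      show "(SOME r. r * S i0 = e) * S i0 = e" using ri0 by (rule someI_ex)
    qed
  qed
qed


lemma pq_facts:
  fixes e f u t s r :: "'a::monoid_mult"
  assumes e: "e*e = e" and f: "f*f = f" and fu: "f*u = u" and us: "u*s = f"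
    and te: "t*e = t" and rt: "r*t = e"
  shows "(s*u)*(s*u) = s*u" "(t*r)*(t*r) = t*r" "u*(s*u) = u" "(t*r)*t = t"
    "f = u*(s*u)*s" "e = r*(t*r)*t"
proof -
  show "(s*u)*(s*u) = s*u" by (metis mult.assoc us fu)
  show "(t*r)*(t*r) = t*r" by (metis mult.assoc rt te)
  show 1: "u*(s*u) = u" by (metis mult.assoc us fu)
  show 2: "(t*r)*t = t" by (metis mult.assoc rt te)
  show "f = u*(s*u)*s" using 1 us by simp
  show "e = r*(t*r)*t" using 2 rt by (simp add: mult.assoc)
qed

theorem mainTheorem18:
  fixes e f :: "'a::{monoid_mult, finite}"
  assumes "rectangular TYPE('a)"
    and "generated_by_regular TYPE('a)"
    and "e \<in> idems" and "f \<in> idems"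
  shows "(\<not> two_ideal e \<subseteq> two_ideal f \<and> \<not> two_ideal f \<subseteq> two_ideal e \<longrightarrow>
           AIrr e f = Irr e f \<and>
           (\<forall>m\<in>AIrr e f. \<exists>a b. m = b * a \<and> left_ideal a = left_ideal e \<and> right_ideal b = right_ideal f))
       \<and> (two_ideal e \<subset> two_ideal f \<longrightarrow> AIrr e f = {m \<in> khom e f. left_ideal m = left_ideal e})
       \<and> (two_ideal f \<subset> two_ideal e \<longrightarrow> AIrr e f = {m \<in> khom e f. right_ideal m = right_ideal f})
       \<and> AIrr e e = unit_group e"
proof -
  note R = assms(1) and gen = assms(2)
  have e: "e*e = e" and f: "f*f = f" using assms(3,4) unfolding idems_def by auto
  have kh: "f*m = m" "m*e = m" if "m \<in> AIrr e f" for m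
    using that khom_char[OF e f] unfolding AIrr_def by auto
  have P1: "\<not> two_ideal e \<subseteq> two_ideal f \<and> \<not> two_ideal f \<subseteq> two_ideal e \<longrightarrow>
           AIrr e f = Irr e f \<and>
           (\<forall>m\<in>AIrr e f. \<exists>a b. m = b * a \<and> left_ideal a = left_ideal e \<and> right_ideal b = right_ideal f)"
  proof
    assume inc: "\<not> two_ideal e \<subseteq> two_ideal f \<and> \<not> two_ideal f \<subseteq> two_ideal e"
    have "AIrr e f \<subseteq> Irr e f"
    proof
      fix m assume mA: "m \<in> AIrr e f"
      note mk = kh[OF mA]
      have "\<not> split_mono e f m"
      proof
        assume "split_mono e f m"
        then obtain r where "r*m = e" unfolding split_mono_def by blast
        then have "e = r*f*m" using mk by (simp add: mult.assoc)
        then have "e \<in> two_ideal f" unfolding two_ideal_iff by blast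
        then show False using inc two_ideal_trans by blast
      qed
      moreover have "\<not> split_epi e f m"
      proof
        assume "split_epi e f m"
        then obtain s where "m*s = f" unfolding split_epi_def by blast
        then have "f = m*e*s" using mk by simp
        then have "f \<in> two_ideal e" unfolding two_ideal_iff by blast
        then show False using inc two_ideal_trans by blast
      qed
      ultimately show "m \<in> Irr e f" using mA unfolding Irr_def by blast
    qed
    then have "AIrr e f = Irr e f" unfolding Irr_def by blast
    moreover have "\<forall>m\<in>AIrr e f. \<exists>a b. m = b * a \<and> left_ideal a = left_ideal e \<and> right_ideal b = right_ideal f"
    proof
      fix m assume mA: "m \<in> AIrr e f"
      obtain u t where ut: "m = u*t" "f*u = u" "\<exists>s. u*s = f" "t*e = t" "\<exists>r. r*t = e"
        using key[OF gen e f mA] by blast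
      show "\<exists>a b. m = b * a \<and> left_ideal a = left_ideal e \<and> right_ideal b = right_ideal f"
        using ut left_eq[OF ut(4)] right_eq[OF ut(2)] by blast
    qed
    ultimately show "AIrr e f = Irr e f \<and>
           (\<forall>m\<in>AIrr e f. \<exists>a b. m = b * a \<and> left_ideal a = left_ideal e \<and> right_ideal b = right_ideal f)"
      by blast
  qed
  have P2: "two_ideal e \<subset> two_ideal f \<longrightarrow> AIrr e f = {m \<in> khom e f. left_ideal m = left_ideal e}"
  proof
    assume sub: "two_ideal e \<subset> two_ideal f"
    then have "e \<in> two_ideal f" using self_two_ideal[of e] by blast
    then obtain c d where cd: "e = c*f*d" unfolding two_ideal_iff by blast
    show "AIrr e f = {m \<in> khom e f. left_ideal m = left_ideal e}"
    proof
      show "AIrr e f \<subseteq> {m \<in> khom e f. left_ideal m = left_ideal e}"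
      proof
        fix m assume mA: "m \<in> AIrr e f"
        obtain u t s r where ut: "m = u*t" "f*u = u" "u*s = f" "t*e = t" "r*t = e"
          using key[OF gen e f mA] by blast
        note pq = pq_facts[OF e f ut(2,3,4,5)]
        have "t*r = (t*c*u)*(s*u)*(s*d*r)"
        proof -
          have "t*r = t*e*r" using ut(4) by simp
          also have "\<dots> = t*c*(u*(s*u)*s)*d*r" using cd pq(5) by (simp add: mult.assoc)
          finally show ?thesis by (simp add: mult.assoc)
        qed
        then have "t*r \<in> two_ideal (s*u)" unfolding two_ideal_iff by blast
        then obtain z where z: "z*((s*u)*(t*r)) = t*r" using eps_lemma(1)[OF R pq(2) pq(1)] by blast
        have "(r*z*s)*m = e"
        proof -
          have "(r*z*s)*m = r*(z*((s*u)*((t*r)*t)))" using ut(1,4,5) by (simp add: mult.assoc)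
          also have "\<dots> = r*((z*((s*u)*(t*r)))*t)" by (simp add: mult.assoc)
          also have "\<dots> = r*((t*r)*t)" using z by simp
          also have "\<dots> = e" using pq(4) ut(5) by simp
          finally show ?thesis .
        qed
        then have "left_ideal m = left_ideal e" using left_eq[OF kh(2)[OF mA]] by blast
        moreover have "m \<in> khom e f" using mA unfolding AIrr_def by blast
        ultimately show "m \<in> {m \<in> khom e f. left_ideal m = left_ideal e}" by blast
      qed
    next
      show "{m \<in> khom e f. left_ideal m = left_ideal e} \<subseteq> AIrr e f"
      proof
        fix m assume "m \<in> {m \<in> khom e f. left_ideal m = left_ideal e}"
        then have mk: "m \<in> khom e f" and lm: "left_ideal m = left_ideal e" by auto
        have "m*e = m" using mk khom_char[OF e f] by auto
        then obtain w where w: "w*m = e" using left_eq lm by blast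
        show "m \<in> AIrr e f" unfolding AIrr_def
        proof (intro CollectI conjI ballI impI mk)
          fix e' h g assume e': "e' \<in> idems" and h: "h \<in> khom e e'" and g: "g \<in> khom e' f"
            and mgh: "m = g*h"
          have e'e': "e'*e' = e'" using e' unfolding idems_def by simp
          have "e'*h = h" using h khom_char[OF e e'e'] by auto
          moreover have "(w*g)*h = e" using w mgh by (simp add: mult.assoc)
          ultimately have "split_mono e e' h" using smono_char[OF e e'e'] by blast
          then show "split_mono e e' h \<or> split_epi e' f g" by blast
        qed
      qed
    qed
  qed
  have P3: "two_ideal f \<subset> two_ideal e \<longrightarrow> AIrr e f = {m \<in> khom e f. right_ideal m = right_ideal f}"
  proof
    assume sub: "two_ideal f \<subset> two_ideal e"
    then have "f \<in> two_ideal e" using self_two_ideal[of f] by blast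
    then obtain c d where cd: "f = c*e*d" unfolding two_ideal_iff by blast
    show "AIrr e f = {m \<in> khom e f. right_ideal m = right_ideal f}"
    proof
      show "AIrr e f \<subseteq> {m \<in> khom e f. right_ideal m = right_ideal f}"
      proof
        fix m assume mA: "m \<in> AIrr e f"
        obtain u t s r where ut: "m = u*t" "f*u = u" "u*s = f" "t*e = t" "r*t = e"
          using key[OF gen e f mA] by blast
        note pq = pq_facts[OF e f ut(2,3,4,5)]
        have "s*u = (s*c*r)*(t*r)*(t*d*u)"
        proof -
          have "s*u = s*f*u" using ut(2) by (simp add: mult.assoc)
          also have "\<dots> = s*c*(r*(t*r)*t)*d*u" using cd pq(6) by (simp add: mult.assoc)
          finally show ?thesis by (simp add: mult.assoc)
        qed
        then have "s*u \<in> two_ideal (t*r)" unfolding two_ideal_iff by blast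
        then obtain w where w: "((s*u)*(t*r))*w = s*u" using eps_lemma(2)[OF R pq(1) pq(2)] by blast
        have "m*(r*w*s) = f"
        proof -
          have "m*(r*w*s) = (u*(s*u))*(t*r)*w*s" using ut(1) pq(3) by (simp add: mult.assoc)
          also have "\<dots> = u*(((s*u)*(t*r))*w)*s" by (simp add: mult.assoc)
          also have "\<dots> = u*(s*u)*s" using w by simp
          also have "\<dots> = f" using pq(5) by simp
          finally show ?thesis .
        qed
        then have "right_ideal m = right_ideal f" using right_eq[OF kh(1)[OF mA]] by blast
        moreover have "m \<in> khom e f" using mA unfolding AIrr_def by blast
        ultimately show "m \<in> {m \<in> khom e f. right_ideal m = right_ideal f}" by blast
      qed
    next
      show "{m \<in> khom e f. right_ideal m = right_ideal f} \<subseteq> AIrr e f"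
      proof
        fix m assume "m \<in> {m \<in> khom e f. right_ideal m = right_ideal f}"
        then have mk: "m \<in> khom e f" and rm: "right_ideal m = right_ideal f" by auto
        have "f*m = m" using mk khom_char[OF e f] by auto
        then obtain w where w: "m*w = f" using right_eq rm by blast
        show "m \<in> AIrr e f" unfolding AIrr_def
        proof (intro CollectI conjI ballI impI mk)
          fix e' h g assume e': "e' \<in> idems" and h: "h \<in> khom e e'" and g: "g \<in> khom e' f"
            and mgh: "m = g*h"
          have e'e': "e'*e' = e'" using e' unfolding idems_def by simp
          have "g*e' = g" using g khom_char[OF e'e' f] by auto
          moreover have "g*(h*w) = f" using w mgh by (simp add: mult.assoc)
          ultimately have "split_epi e' f g" using sepi_char[OF f e'e'] by blast
          then show "split_mono e e' h \<or> split_epi e' f g" by blast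
        qed
      qed
    qed
  qed
  have P4: "AIrr e e = unit_group e"
  proof
    show "AIrr e e \<subseteq> unit_group e"
    proof
      fix m assume mA: "m \<in> AIrr e e"
      have mk: "m \<in> khom e e" using mA unfolding AIrr_def by blast
      then have em: "e*m = m" "m*e = m" using khom_char[OF e e] by auto
      obtain u t s r where ut: "m = u*t" "e*u = u" "u*s = e" "t*e = t" "r*t = e"
        using key[OF gen e e mA] by blast
      note pq = pq_facts[OF e e ut(2,3,4,5)]
      have tp: "two_ideal (s*u) = two_ideal e"
      proof
        have "s*u = s*e*u" using ut(2) by (simp add: mult.assoc)
        then have "s*u \<in> two_ideal e" unfolding two_ideal_iff by blast
        then show "two_ideal (s*u) \<subseteq> two_ideal e" by (rule two_ideal_trans)
        have "e = u*(s*u)*s" by (rule pq(5))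
        then have "e \<in> two_ideal (s*u)" unfolding two_ideal_iff by blast
        then show "two_ideal e \<subseteq> two_ideal (s*u)" by (rule two_ideal_trans)
      qed
      have tq: "two_ideal (t*r) = two_ideal e"
      proof
        have "t*r = t*e*r" using ut(4) by simp
        then have "t*r \<in> two_ideal e" unfolding two_ideal_iff by blast
        then show "two_ideal (t*r) \<subseteq> two_ideal e" by (rule two_ideal_trans)
        have "e = r*(t*r)*t" by (rule pq(6))
        then have "e \<in> two_ideal (t*r)" unfolding two_ideal_iff by blast
        then show "two_ideal e \<subseteq> two_ideal (t*r)" by (rule two_ideal_trans)
      qed
      have "two_ideal ((s*u)*(t*r)) = two_ideal e"
        using rect[OF R e pq(1) tp pq(2) tq] by blast
      then have "e \<in> two_ideal ((s*u)*(t*r))" using self_two_ideal[of e] by blast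
      then obtain c d where cd: "e = c*((s*u)*(t*r))*d" unfolding two_ideal_iff by blast
      have "(c*s)*m*(r*d) = e" using cd ut(1) by (simp add: mult.assoc)
      then obtain v where v: "e*v = v" "v*e = v" "m*v = e" "v*m = e"
        using fin_unit[OF e em] by blast
      have "v \<in> khom e e" using v khom_char[OF e e] by auto
      then show "m \<in> unit_group e" unfolding unit_group_def using mk v by blast
    qed
  next
    show "unit_group e \<subseteq> AIrr e e"
    proof
      fix m assume "m \<in> unit_group e"
      then obtain v where mk: "m \<in> khom e e" and v: "v*m = e"
        unfolding unit_group_def by blast
      show "m \<in> AIrr e e" unfolding AIrr_def
      proof (intro CollectI conjI ballI impI mk)
        fix e' h g assume e': "e' \<in> idems" and h: "h \<in> khom e e'" and g: "g \<in> khom e' e"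
          and mgh: "m = g*h"
        have e'e': "e'*e' = e'" using e' unfolding idems_def by simp
        have "e'*h = h" using h khom_char[OF e e'e'] by auto
        moreover have "(v*g)*h = e" using v mgh by (simp add: mult.assoc)
        ultimately have "split_mono e e' h" using smono_char[OF e e'e'] by blast
        then show "split_mono e e' h \<or> split_epi e' e g" by blast
      qed
    qed
  qed
  show ?thesis using P1 P2 P3 P4 by blast
qed

end
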